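(* For all integers $n\ge 0$ and $t\ge 1$, $$\bigl(F(t-1)-2\bigr)\,c(2^t n)=c\bigl(2^t n+2^{t-1}-1\bigr).$$
   Context: For $n\ge 0$, $c(n)=\sum_{i=0}^{n}\left(\binom{n}{i}\bmod 2\right)2^{i}$, the integer whose binary digits form the $n$-th row of Pascal's triangle modulo $2$. $F(j)=2^{2^j}+1$ is the $j$-th Fermat number. *)

theory Defs
  imports Main
begin

definition c :: "nat \<Rightarrow> nat" where
  "c n = (\<Sum>i=0..n. ((n choose i) mod 2) * 2 ^ i)"

definition F :: "nat \<Rightarrow> nat" where
  "F j = 2 ^ (2 ^ j) + 1"

end

theory Submission
  imports Defs
begin
lemma choose_SS: "(Suc (Suc n) choose Suc (Suc m)) = (n choose m) + 2*(n choose Suc m) + (n choose Suc (Suc m))"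
  by simp

lemma m2: "(X::nat) = A + 2*B + C \<Longrightarrow> X mod 2 = (A mod 2 + C mod 2) mod 2"
  by presburger

lemma par: "(2*k choose 2*i) mod 2 = (k choose i) mod 2 \<and> (2*k choose (2*i+1)) mod 2 = 0"
proof (induction k arbitrary: i)
  case 0
  then show ?case by (cases i) auto
next
  case (Suc k)
  have e: "2 * Suc k = Suc (Suc (2*k))" by simp
  show ?case
  proof (cases i)
    case 0
    then show ?thesis by (simp add: e)
  next
    case (Suc j)
    have a: "(2*Suc k choose 2*i) = (2*k choose 2*j) + 2*(2*k choose (2*j+1)) + (2*k choose 2*(Suc j))"
      unfolding e Suc using choose_SS[of "2*k" "2*j"] by simp
    have b: "(2*Suc k choose (2*i+1)) = (2*k choose (2*j+1)) + 2*(2*k choose 2*(Suc j)) + (2*k choose (2*(Suc j)+1))"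
      unfolding e Suc using choose_SS[of "2*k" "2*j+1"] by simp
    have h1: "(2*k choose 2*j) mod 2 = (k choose j) mod 2" "(2*k choose (2*j+1)) mod 2 = 0"
         "(2*k choose 2*(Suc j)) mod 2 = (k choose Suc j) mod 2" "(2*k choose (2*(Suc j)+1)) mod 2 = 0"
      using Suc.IH by blast+
    have "(2*Suc k choose 2*i) mod 2 = ((k choose j) + (k choose Suc j)) mod 2"
      using m2[OF a] unfolding h1(1) h1(3) mod_add_eq .
    also have "\<dots> = (Suc k choose i) mod 2" by (simp add: Suc)
    moreover have "(2*Suc k choose (2*i+1)) mod 2 = 0" using m2[OF b] h1 by simp
    ultimately show ?thesis by simp
  qed
qed
definition b :: "nat \<Rightarrow> nat \<Rightarrow> int" where "b n i = int ((n choose i) mod 2)"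
definition g :: "nat \<Rightarrow> int \<Rightarrow> int" where "g n x = (\<Sum>i<Suc n. b n i * x^i)"

lemma g_ext: "n < M \<Longrightarrow> (\<Sum>i<M. b n i * x^i) = g n x"
proof (induction M)
  case 0 then show ?case by simp
next
  case (Suc M)
  show ?case
  proof (cases "n < M")
    case True
    then have "(\<Sum>i<Suc M. b n i * x^i) = (\<Sum>i<M. b n i * x^i)" by (simp add: b_def binomial_eq_0)
    then show ?thesis using Suc True by simp
  next
    case False
    then have "M = n" using Suc.prems by simp
    then show ?thesis by (simp add: g_def)
  qed
qed

lemma split2: "(\<Sum>i<2*(M::nat). f i) = (\<Sum>i<M. f (2*i)) + (\<Sum>i<M. (f (2*i+1)::int))"
  by (induction M) auto

lemma b_even: "b (2*k) (2*i) = b k i" "b (2*k) (2*i+1) = 0"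
  using par[of k i] by (auto simp: b_def)

lemma b_odd: "b (2*k+1) (2*i) = b k i" "b (2*k+1) (2*i+1) = b k i"
proof -
  show "b (2*k+1) (2*i) = b k i"
  proof (cases i)
    case 0 then show ?thesis by (simp add: b_def)
  next
    case (Suc j)
    have "(2*k+1 choose 2*i) = (2*k choose (2*j+1)) + (2*k choose 2*i)"
      using Suc by (simp add: choose_reduce_nat)
    then have "(2*k+1 choose 2*i) mod 2 = (2*k choose 2*i) mod 2"
      using par[of k j] by presburger
    then show ?thesis using par[of k i] unfolding b_def by simp
  qed
  show "b (2*k+1) (2*i+1) = b k i"
  proof -
    have "(2*k+1 choose (2*i+1)) = (2*k choose (2*i)) + (2*k choose (2*i+1))"
      by (simp add: choose_reduce_nat)
    then have "(2*k+1 choose (2*i+1)) mod 2 = (2*k choose 2*i) mod 2"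
      using par[of k i] by presburger
    then show ?thesis using par[of k i] unfolding b_def by simp
  qed
qed

lemma b_S: "b (2*k) (Suc (2*i)) = 0" "b (Suc (2*k)) (2*i) = b k i" "b (Suc(2*k)) (Suc(2*i)) = b k i"
  using b_even b_odd by simp_all

lemma g_even: "g (2*k) x = g k (x^2)"
proof -
  have "g (2*k) x = (\<Sum>i<2*Suc k. b (2*k) i * x^i)" by (rule g_ext[symmetric]) simp
  also have "\<dots> = (\<Sum>i<Suc k. b k i * (x^2)^i)"
    by (simp add: split2 b_even b_S power_mult)
  also have "\<dots> = g k (x^2)" by (simp add: g_def)
  finally show ?thesis .
qed

lemma g_odd: "g (2*k+1) x = (1+x) * g k (x^2)"
proof -
  have "g (2*k+1) x = (\<Sum>i<2*Suc k. b (2*k+1) i * x^i)" by (rule g_ext[symmetric]) simp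
  also have "\<dots> = (\<Sum>i<Suc k. b (2*k+1) (2*i) * x^(2*i)) + (\<Sum>i<Suc k. b (2*k+1) (2*i+1) * x^(2*i+1))"
    by (rule split2)
  also have "\<dots> = (\<Sum>i<Suc k. b k i * (x^2)^i) + (\<Sum>i<Suc k. b k i * (x^2)^i * x)"
    by (simp only: b_odd power_mult power_add power_one_right mult.assoc)
  also have "\<dots> = (1+x) * g k (x^2)"
  proof -
    have "(\<Sum>i<Suc k. b k i * (x^2)^i * x) = x * g k (x^2)"
      unfolding g_def sum_distrib_left by (simp add: mult.commute)
    then show ?thesis unfolding g_def by (simp add: algebra_simps)
  qed
  finally show ?thesis .
qed

lemma g0: "g 0 x = 1" by (simp add: g_def b_def)

lemma g_mul: "r < 2^s \<Longrightarrow> g (2^s*q + r) x = g r x * g q (x^(2^s))"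
proof (induction s arbitrary: q r x)
  case 0 then show ?case by (simp add: g0)
next
  case (Suc s)
  obtain r' where r': "r = 2*r' \<or> r = 2*r'+1" by (metis oddE evenE)
  have rl: "r' < 2^s" using Suc.prems r' by auto
  have pw: "(x^2)^(2^s) = x^(2^Suc s)" by (simp add: power_mult[symmetric] mult.commute)
  from r' show ?case
  proof
    assume h: "r = 2*r'"
    have "2^Suc s*q + r = 2*(2^s*q+r')" using h by simp
    then have "g (2^Suc s*q + r) x = g (2^s*q+r') (x^2)" by (simp only: g_even)
    also have "\<dots> = g r' (x^2) * g q ((x^2)^(2^s))" by (rule Suc.IH[OF rl])
    also have "\<dots> = g r x * g q (x^(2^Suc s))" using h pw by (simp only: g_even)
    finally show ?thesis .
  next
    assume h: "r = 2*r'+1"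
    have "2^Suc s*q + r = 2*(2^s*q+r')+1" using h by simp
    then have "g (2^Suc s*q + r) x = (1+x) * g (2^s*q+r') (x^2)" by (simp only: g_odd)
    also have "\<dots> = (1+x) * (g r' (x^2) * g q ((x^2)^(2^s)))" by (simp only: Suc.IH[OF rl])
    also have "\<dots> = g r x * g q (x^(2^Suc s))" using h pw by (simp only: g_odd mult.assoc)
    finally show ?thesis .
  qed
qed

lemma g_ones: "(1-x) * g (2^s - 1) x = 1 - x^(2^s)"
proof (induction s arbitrary: x)
  case 0 then show ?case by (simp add: g0)
next
  case (Suc s)
  have p: "(1::nat) \<le> 2^s" by simp
  have e: "2^Suc s - 1 = 2*(2^s - 1) + (1::nat)"
  proof -
    have "\<forall>m::nat. 1 \<le> m \<longrightarrow> 2*m - 1 = 2*(m-1)+1" by arith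
    then show ?thesis using p by simp
  qed
  have "(1-x) * g (2^Suc s - 1) x = (1-x^2) * g (2^s-1) (x^2)"
    unfolding e g_odd by (simp add: algebra_simps power2_eq_square)
  also have "\<dots> = 1 - x^(2^Suc s)" using Suc.IH[of "x^2"] by (simp add: power_mult[symmetric] mult.commute)
  finally show ?case .
qed

lemma c_g: "int (c n) = g n 2"
  by (simp add: c_def g_def b_def atLeast0AtMost lessThan_Suc_atMost of_nat_sum)

theorem lemma1:
  fixes n t :: nat
  assumes "t \<ge> 1"
  shows "(int (F (t - 1)) - 2) * int (c (2 ^ t * n)) = int (c (2 ^ t * n + 2 ^ (t - 1) - 1))"
proof -
  obtain s where t: "t = Suc s" using assms by (cases t) auto
  have go: "g (2^s-1) 2 = 2^(2^s) - 1" using g_ones[of 2 s] by simp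
  have "2^t*n + 2^(t-1) - 1 = 2^s*(2*n) + (2^s - 1)" using t by simp
  then have "int (c (2 ^ t * n + 2 ^ (t - 1) - 1)) = g (2^s-1) 2 * g (2*n) (2^(2^s))"
    using c_g g_mul[of "2^s-1" s "2*n" 2] by simp
  moreover have "int (c (2^t*n)) = g (2*n) (2^(2^s))"
  proof -
    have "2^t*n = 2^s*(2*n) + 0" using t by simp
    then show ?thesis using c_g g_mul[of 0 s "2*n" 2] by (simp only: g0) simp
  qed
  ultimately show ?thesis using go t by (simp add: F_def)
qed
end
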